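(* Let $q\ge2$ and $r\in\{0,1,\dots,q-1\}$ be integers and let $p>q+r$ be an integer. Let $A=\{d\in\{0,1,\dots,p-1\}: d\equiv r \pmod q\}$, $s=\#A$ (so $s\ge 2$ and $h(i)=qi+r$ for $0\le i\le s-1$). Then \[ m=\inf_{n\ge1}b_n=\frac{q(s-1)+r}{p-1},\qquad M=\sup_{n\ge1}b_n=\frac{q(p-1)+pr}{p-1}. \]
   Context: For integers $p> s\ge 2$ and $A\subset\{0,\dots,p-1\}$ with $\#A=s$, let $h:\{0,\dots,s-1\}\to A$ be the strictly increasing bijection. For a positive integer $n$ with base-$s$ expansion $n=\sum_{i=0}^k\varepsilon_i s^i$ ($\varepsilon_k\ne0$), put $a_n=\sum_{i=0}^k h(\varepsilon_i)p^i$ and $b_n=a_n/n^{\log_s p}$. *)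

theory Defs
  imports Complex_Main
begin

fun base_digits :: "nat \<Rightarrow> nat \<Rightarrow> nat list" where
  "base_digits s n = (if n = 0 \<or> s < 2 then [] else n mod s # base_digits s (n div s))"

declare base_digits.simps[simp del]

definition digit_map :: "nat set \<Rightarrow> nat \<Rightarrow> nat" where
  "digit_map A i = sorted_list_of_set A ! i"

definition a_seq :: "nat \<Rightarrow> nat set \<Rightarrow> nat \<Rightarrow> nat" where
  "a_seq p A n = (let ds = base_digits (card A) n in
      (\<Sum>i<length ds. digit_map A (ds ! i) * p ^ i))"

definition b_seq :: "nat \<Rightarrow> nat set \<Rightarrow> nat \<Rightarrow> real" where
  "b_seq p A n = real (a_seq p A n) / real n powr log (real (card A)) (real p)"

end

theory Submission
  imports Defs "HOL-Analysis.Analysis"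
begin


lemma A_eq:
  fixes q r p :: nat
  assumes "q \<ge> 2" "r < q" "p > q + r"
  defines "N \<equiv> (p - r - 1) div q + 1"
  shows "{d. d < p \<and> d mod q = r} = (\<lambda>i. q*i+r) ` {0..<N}"
proof (intro set_eqI iffI)
  fix d assume "d \<in> {d. d < p \<and> d mod q = r}"
  then have d: "d < p" "d mod q = r" by auto
  have "d = q * (d div q) + r" using d by (metis mult_div_mod_eq)
  moreover have "d div q < N"
  proof -
    have "q * (d div q) \<le> p - r - 1" using d \<open>d = _\<close> by linarith
    then have "d div q \<le> (p - r - 1) div q"
      by (metis assms(1) div_le_mono nonzero_mult_div_cancel_left not_numeral_le_zero)
    then show ?thesis unfolding N_def by linarith
  qed
  ultimately show "d \<in> (\<lambda>i. q*i+r) ` {0..<N}" by force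
next
  fix d assume "d \<in> (\<lambda>i. q*i+r) ` {0..<N}"
  then obtain i where i: "i < N" "d = q*i+r" by auto
  have "i \<le> (p - r - 1) div q" using i N_def by linarith
  then have "q * i \<le> q * ((p - r - 1) div q)" by simp
  also have "\<dots> \<le> p - r - 1" by simp
  finally have "d < p" using i assms by linarith
  moreover have "d mod q = r" using i assms by simp
  ultimately show "d \<in> {d. d < p \<and> d mod q = r}" by simp
qed

lemma N_props:
  fixes q r p :: nat
  assumes "q \<ge> 2" "r < q" "p > q + r"
  shows "(p - r - 1) div q + 1 \<ge> 2" "(p - r - 1) div q + 1 < p"
proof -
  have "q \<le> p - r - 1" using assms by linarith
  then have "1 \<le> (p - r - 1) div q" using assms
    by (metis div_le_mono div_self not_numeral_le_zero)
  then show "(p - r - 1) div q + 1 \<ge> 2" by simp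
  have "(p - r - 1) div q \<le> (p - r - 1) div 2" using assms by (simp add: div_le_mono2)
  then show "(p - r - 1) div q + 1 < p" using assms by linarith
qed

lemma card_A:
  fixes q r p :: nat
  assumes "q \<ge> 2" "r < q" "p > q + r"
  shows "card {d. d < p \<and> d mod q = r} = (p - r - 1) div q + 1"
proof -
  have "inj_on (\<lambda>i. q*i+r) {0..<(p - r - 1) div q + 1}" using assms by (auto simp: inj_on_def)
  then show ?thesis using A_eq[OF assms] card_image by fastforce
qed

lemma digit_map_A:
  fixes q r p :: nat
  assumes "q \<ge> 2" "r < q" "p > q + r" "i < card {d. d < p \<and> d mod q = r}"
  shows "digit_map {d. d < p \<and> d mod q = r} i = q*i + r"
proof -
  define N where "N = (p - r - 1) div q + 1"
  have s1: "sorted_wrt (<) (map (\<lambda>x. x) (map (\<lambda>i. q * i + r) [0..<N]))"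
    using assms by (auto simp: sorted_wrt_iff_nth_less)
  have s2: "length (map (\<lambda>i. q * i + r) [0..<N]) = card ((\<lambda>i. q * i + r) ` {0..<N})"
    using card_A[OF assms(1-3)] A_eq[OF assms(1-3)] N_def by simp
  have s3: "set (map (\<lambda>i. q * i + r) [0..<N]) = (\<lambda>i. q * i + r) ` {0..<N}" by simp
  have "sorted_list_of_set ((\<lambda>i. q*i+r) ` {0..<N}) = map (\<lambda>i. q*i+r) [0..<N]"
    using sorted_list_of_set_unique[of "(\<lambda>i. q*i+r) ` {0..<N}" "map (\<lambda>i. q*i+r) [0..<N]"] s1 s2 s3
    by auto
  moreover have "i < N" using assms card_A[OF assms(1-3)] N_def by simp
  ultimately show ?thesis using A_eq[OF assms(1-3)] N_def
    by (simp add: digit_map_def del: upt_Suc)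
qed



lemma bd_simp: "s \<ge> 2 \<Longrightarrow> n \<noteq> 0 \<Longrightarrow> base_digits s n = n mod s # base_digits s (n div s)"
  by (subst base_digits.simps) auto

lemma bd_zero[simp]: "base_digits s 0 = []"
  by (subst base_digits.simps) auto

lemma bd_less: "s \<ge> 2 \<Longrightarrow> x \<in> set (base_digits s n) \<Longrightarrow> x < s"
proof (induction s n rule: base_digits.induct)
  case (1 s n)
  then show ?case
    by (cases "n = 0") (auto simp: bd_simp)
qed

definition vl :: "real \<Rightarrow> nat list \<Rightarrow> real" where
  "vl b xs = (\<Sum>i<length xs. real (xs!i) * b^i)"

lemma vl_Cons: "vl b (x # xs) = real x + b * vl b xs"
  unfolding vl_def by (simp del: sum.lessThan_Suc add: sum.lessThan_Suc_shift sum_distrib_left mult_ac)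

lemma vl_Nil[simp]: "vl b [] = 0" by (simp add: vl_def)

lemma vl_snoc: "vl b (xs @ [e]) = vl b xs + real e * b ^ length xs"
  unfolding vl_def by (simp add: nth_append)

lemma bd_val: "s \<ge> 2 \<Longrightarrow> vl (real s) (base_digits s n) = real n"
proof (induction s n rule: base_digits.induct)
  case (1 s n)
  show ?case
  proof (cases "n = 0")
    case False
    then have "vl (real s) (base_digits s n) = real (n mod s) + real s * real (n div s)"
      using 1 by (simp add: bd_simp vl_Cons)
    also have "\<dots> = real n" by (metis mod_div_mult_eq mult.commute of_nat_add of_nat_mult)
    finally show ?thesis .
  qed simp
qed

lemma bd_len: "s \<ge> 2 \<Longrightarrow> n \<noteq> 0 \<Longrightarrow>
   length (base_digits s n) \<ge> 1 \<and> s ^ (length (base_digits s n) - 1) \<le> n \<and> n < s ^ length (base_digits s n)"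
proof (induction s n rule: base_digits.induct)
  case (1 s n)
  show ?case
  proof (cases "n div s = 0")
    case True
    then have "n < s" using 1 by (simp add: div_eq_0_iff)
    then show ?thesis using 1(2,3) True by (simp add: bd_simp[OF 1(2,3)])
  next
    case False
    let ?L = "length (base_digits s (n div s))"
    from 1(1)[OF _ 1(2) False] 1(2,3) have ih: "?L \<ge> 1" "s ^ (?L - 1) \<le> n div s" "n div s < s ^ ?L" by auto
    have "s ^ ?L = s * s ^ (?L - 1)" using ih(1) by (cases ?L) auto
    also have "\<dots> \<le> s * (n div s)" using ih(2) by simp
    also have "\<dots> \<le> n" by simp
    finally have a: "s ^ ?L \<le> n" .
    have "n mod s < s" using 1 by simp
    moreover have "n = s * (n div s) + n mod s" by simp
    ultimately have "n < s * (n div s) + s" by linarith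
    also have "\<dots> = s * (n div s + 1)" by simp
    also have "\<dots> \<le> s * s ^ ?L" using ih(3) by (intro mult_le_mono2) simp
    finally have b: "n < s ^ Suc ?L" by simp
    show ?thesis using a b by (simp add: bd_simp[OF 1(2,3)])
  qed
qed

lemma bd_pow: "s \<ge> 2 \<Longrightarrow> base_digits s (s ^ k) = replicate k 0 @ [1]"
proof (induction k)
  case 0
  then show ?case by (simp add: bd_simp)
next
  case (Suc k)
  then show ?case by (simp add: bd_simp)
qed

lemma aux: fixes s X :: nat assumes "s \<ge> 1" shows "(s * X + (s - 1)) mod s = s - 1" "(s * X + (s - 1)) div s = X"
proof -
  obtain t where t: "s = Suc t" using assms by (cases s) auto
  show "(s * X + (s - 1)) mod s = s - 1" unfolding t diff_Suc_1 mod_mult_self4 by simp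
  show "(s * X + (s - 1)) div s = X" unfolding t
    by (metis add.commute diff_Suc_1 div_mult_self4 div_less lessI add_0 nat.simps(3))
qed
lemma bd_pm1: "s \<ge> 2 \<Longrightarrow> base_digits s (s ^ k - 1) = replicate k (s - 1)"
proof (induction k)
  case 0
  then show ?case by simp
next
  case (Suc k)
  have pos: "s ^ k \<ge> 1" using Suc by simp
  have eq: "s ^ Suc k - 1 = s * (s ^ k - 1) + (s - 1)"
    using pos Suc.prems by (simp add: algebra_simps diff_mult_distrib2)
  have m: "(s ^ Suc k - 1) mod s = s - 1" unfolding eq using Suc.prems aux by simp
  have d: "(s ^ Suc k - 1) div s = s ^ k - 1" unfolding eq using Suc.prems aux by simp
  have "s ^ Suc k \<ge> 2" using mult_le_mono[OF Suc.prems pos] by simp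
  then have nz: "s ^ Suc k - 1 \<noteq> 0" by simp
  show ?case using bd_simp[OF Suc.prems nz] m d Suc by simp
qed



lemma pw_le_self: fixes t a :: real assumes "0 \<le> t" "t \<le> 1" "a \<ge> 1" shows "t powr a \<le> t"
  by (metis assms(1) assms(2) assms(3) powr_one powr_mono')

lemma pw_ge_self: fixes t a :: real assumes "1 \<le> t" "a \<ge> 1" shows "t \<le> t powr a"
  by (smt (verit, ccfv_SIG) assms(1,2) powr_mono_both powr_one)

lemma pw_pow: fixes x a :: real assumes "0 < x" shows "(x ^ n) powr a = (x powr a) ^ n"
  by (smt (verit, ccfv_SIG) assms powr_gt_zero powr_powr_swap powr_realpow)

lemma superadd: fixes a b al :: real assumes "0 \<le> a" "0 \<le> b" "al \<ge> 1"
  shows "a powr al + b powr al \<le> (a + b) powr al"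
proof (cases "a + b = 0")
  case True then have "a = 0" "b = 0" using assms by auto
  then show ?thesis using assms by simp
next
  case False
  then have ab: "a + b > 0" using assms by simp
  have "a powr al = (a/(a+b)) powr al * (a+b) powr al" using ab assms by (simp add: powr_divide)
  also have "\<dots> \<le> (a/(a+b)) * (a+b) powr al"
    using ab assms by (intro mult_right_mono pw_le_self) auto
  finally have 1: "a powr al \<le> (a/(a+b)) * (a+b) powr al" .
  have "b powr al = (b/(a+b)) powr al * (a+b) powr al" using ab assms by (simp add: powr_divide)
  also have "\<dots> \<le> (b/(a+b)) * (a+b) powr al"
    using ab assms by (intro mult_right_mono pw_le_self) auto
  finally have 2: "b powr al \<le> (b/(a+b)) * (a+b) powr al" .
  have s1: "a/(a+b) + b/(a+b) = 1" using ab by (simp add: add_divide_distrib[symmetric])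
  have "(a/(a+b)) * (a+b) powr al + (b/(a+b)) * (a+b) powr al = (a/(a+b) + b/(a+b)) * (a+b) powr al"
    by (simp add: distrib_right)
  then have "(a/(a+b)) * (a+b) powr al + (b/(a+b)) * (a+b) powr al = (a+b) powr al"
    using s1 by simp
  then show ?thesis using 1 2 by linarith
qed

lemma cvx: fixes x y t al :: real assumes "0 < x" "0 < y" "0 \<le> t" "t \<le> 1" "al \<ge> 1"
  shows "((1-t)*x + t*y) powr al \<le> (1-t)* x powr al + t * y powr al"
  using convex_onD[OF powr_convex[OF assms(5)], of t x y] assms by simp

lemma shift_diff: fixes y e al :: real assumes "0 < y" "y \<le> 1" "1 \<le> e" "al \<ge> 1"
  shows "(y+e) powr al + 1 \<le> y powr al + (1+e) powr al"
proof -
  define l where "l = e / (1 + e - y)"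
  have d: "1 + e - y > 0" using assms by simp
  have l: "0 \<le> l" "l \<le> 1" using assms d by (auto simp: l_def divide_le_eq)
  have lD: "l * (1+e-y) = e" using d by (simp add: l_def)
  have e1: "1 = (1-l)*(1+e) + l*y" using lD by (simp add: algebra_simps; linarith)
  have e2: "y + e = (1-l)*y + l*(1+e)" using lD by (simp add: algebra_simps; linarith)
  have "1 powr al \<le> (1-l)*(1+e) powr al + l * y powr al"
    by (subst e1, rule cvx) (use assms l in auto)
  moreover have "(y+e) powr al \<le> (1-l)*y powr al + l * (1+e) powr al"
    by (subst e2, rule cvx) (use assms l in auto)
  moreover have "(1 - l) * (1 + e) powr al + l * y powr al + ((1 - l) * y powr al + l * (1 + e) powr al) = y powr al + (1+e) powr al"
    by (simp add: algebra_simps)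
  ultimately show ?thesis by simp
qed

lemma e_bound: fixes e s al :: real assumes "0 \<le> e" "e \<le> s - 1" "s > 1" "al \<ge> 1"
  shows "((e+1) powr al - 1) * (s - 1) \<le> e * (s powr al - 1)"
proof -
  define l where "l = e / (s - 1)"
  have l: "0 \<le> l" "l \<le> 1" using assms by (auto simp: l_def field_simps)
  have lD: "l * (s - 1) = e" using assms by (simp add: l_def)
  have e1: "e + 1 = (1 - l) * 1 + l * s" using lD by (simp add: algebra_simps; linarith)
  have "(e+1) powr al \<le> (1 - l) * 1 powr al + l * s powr al"
    by (subst e1, rule cvx) (use assms l in auto)
  then have "(e+1) powr al - 1 \<le> l * (s powr al - 1)" by (simp add: algebra_simps)
  then have "((e+1) powr al - 1) * (s - 1) \<le> l * (s powr al - 1) * (s - 1)"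
    using assms by (intro mult_right_mono) auto
  also have "\<dots> = e * (s powr al - 1)" using assms by (simp add: l_def field_simps)
  finally show ?thesis .
qed

lemma key_ineq: fixes e y s al :: real
  assumes "0 \<le> e" "e \<le> s - 1" "s > 1" "al \<ge> 1" "0 \<le> y" "y \<le> 1" "e = 0 \<or> 1 \<le> e"
  shows "(s - 1) * (e + y) powr al \<le> e * (s powr al - 1) + (s - 1) * y powr al"
proof (cases "e \<ge> 1")
  case False
  then have "e = 0" using assms by auto
  then show ?thesis by simp
next
  case True
  have eb: "((e+1) powr al - 1) * (s - 1) \<le> e * (s powr al - 1)" using e_bound assms by blast
  have "(e+y) powr al - y powr al \<le> (e+1) powr al - 1"
  proof (cases "y = 0")
    case True
    then show ?thesis using superadd[of e 1 al] assms by simp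
  next
    case False
    then show ?thesis using shift_diff[of y e al] assms True by (simp add: add.commute)
  qed
  then have "((e+y) powr al - y powr al) * (s - 1) \<le> ((e+1) powr al - 1) * (s - 1)"
    using assms by (intro mult_right_mono) auto
  then show ?thesis using eb by (simp add: algebra_simps)
qed



lemma vl_nonneg: "b \<ge> 0 \<Longrightarrow> vl b xs \<ge> 0"
  unfolding vl_def by (intro sum_nonneg) auto

lemma vl_bound: fixes s :: nat assumes "\<forall>x\<in>set xs. x < s"
  shows "vl (real s) xs \<le> real s ^ length xs"
  using assms
proof (induction xs rule: rev_induct)
  case Nil then show ?case by simp
next
  case (snoc e xs)
  then have ih: "vl (real s) xs \<le> real s ^ length xs" and e: "e + 1 \<le> s" by auto
  have re: "real e + 1 \<le> real s" using e by (metis of_nat_1 of_nat_add of_nat_le_iff)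
  have "vl (real s) (xs @ [e]) = vl s xs + real e * real s ^ length xs" by (simp add: vl_snoc)
  also have "\<dots> \<le> real s ^ length xs + real e * real s ^ length xs" using ih by simp
  also have "\<dots> = (real e + 1) * real s ^ length xs" by (simp add: algebra_simps)
  also have "\<dots> \<le> real s * real s ^ length xs"
    using re by (intro mult_right_mono) auto
  finally show ?case by simp
qed

lemma upper_digits: fixes s :: nat and al :: real
  assumes "s \<ge> 2" "al \<ge> 1"
  shows "vl (real s powr al) xs \<le> (vl (real s) xs) powr al"
proof (induction xs rule: rev_induct)
  case Nil then show ?case by simp
next
  case (snoc e xs)
  define m where "m = vl (real s) xs"
  define t where "t = real s ^ length xs"
  have m0: "m \<ge> 0" unfolding m_def by (rule vl_nonneg) simp
  have t0: "t > 0" unfolding t_def using assms by simp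
  have T: "t powr al = (real s powr al) ^ length xs" unfolding t_def using assms by (simp add: pw_pow)
  have et: "real e * t powr al \<le> (real e * t) powr al"
  proof (cases "e = 0")
    case False
    then have "real e \<le> real e powr al" using assms by (intro pw_ge_self) auto
    then have "real e * t powr al \<le> real e powr al * t powr al" by (intro mult_right_mono) auto
    then show ?thesis using t0 by (simp add: powr_mult)
  qed simp
  have "vl (real s powr al) (xs @ [e]) = vl (real s powr al) xs + real e * t powr al"
    by (simp add: vl_snoc T)
  also have "\<dots> \<le> m powr al + (real e * t) powr al" using snoc et unfolding m_def by linarith
  also have "\<dots> \<le> (m + real e * t) powr al" using m0 t0 assms by (intro superadd) auto
  also have "m + real e * t = vl (real s) (xs @ [e])" by (simp add: vl_snoc m_def t_def)
  finally show ?case .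
qed

lemma lower_digits: fixes s :: nat and al :: real
  assumes "s \<ge> 2" "al \<ge> 1" "\<forall>x\<in>set xs. x < s"
  shows "(real s - 1) * (vl (real s) xs) powr al \<le> (real s powr al - 1) * vl (real s powr al) xs"
  using assms(3)
proof (induction xs rule: rev_induct)
  case Nil then show ?case by simp
next
  case (snoc e xs)
  define m where "m = vl (real s) xs"
  define c where "c = vl (real s powr al) xs"
  define t where "t = real s ^ length xs"
  define P where "P = real s powr al"
  have ih: "(real s - 1) * m powr al \<le> (P - 1) * c" using snoc by (simp add: m_def c_def P_def)
  have e: "e + 1 \<le> s" using snoc by auto
  have re: "real e + 1 \<le> real s" using e by (metis of_nat_1 of_nat_add of_nat_le_iff)
  have m0: "m \<ge> 0" unfolding m_def by (rule vl_nonneg) simp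
  have mt: "m \<le> t" unfolding m_def t_def using snoc vl_bound by auto
  have t0: "t > 0" unfolding t_def using assms by simp
  have T: "t powr al = P ^ length xs" unfolding t_def P_def using assms by (simp add: pw_pow)
  define y where "y = m / t"
  have y: "0 \<le> y" "y \<le> 1" using m0 mt t0 by (auto simp: y_def)
  have ki: "(real s - 1) * (real e + y) powr al \<le> real e * (P - 1) + (real s - 1) * y powr al"
    unfolding P_def using assms y e
    by (intro key_ineq) (use re in auto)
  have eq1: "(real e * t + m) powr al = t powr al * (real e + y) powr al"
  proof -
    have "real e * t + m = t * (real e + y)" using t0 by (simp add: y_def algebra_simps)
    then show ?thesis using t0 y by (simp add: powr_mult)
  qed
  have eq2: "m powr al = t powr al * y powr al"
  proof -
    have "m = t * y" using t0 by (simp add: y_def)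
    then show ?thesis using t0 y by (simp add: powr_mult)
  qed
  have tp: "t powr al > 0" using t0 by simp
  have "(real s - 1) * (real e * t + m) powr al = t powr al * ((real s - 1) * (real e + y) powr al)"
    by (simp add: eq1)
  also have "\<dots> \<le> t powr al * (real e * (P - 1) + (real s - 1) * y powr al)"
    using ki tp by (intro mult_left_mono) auto
  also have "\<dots> = real e * (P - 1) * t powr al + (real s - 1) * m powr al"
    by (simp add: eq2 algebra_simps)
  also have "\<dots> \<le> real e * (P - 1) * t powr al + (P - 1) * c" using ih by simp
  also have "\<dots> = (P - 1) * vl P (xs @ [e])"
    by (simp add: vl_snoc T c_def P_def algebra_simps)
  finally show ?case by (simp add: vl_snoc m_def t_def P_def algebra_simps)
qed



lemma geo: "((x::real) - 1) * (\<Sum>i<n. x^i) = x^n - 1"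
  by (simp add: power_diff_1_eq)

lemma a_formula:
  fixes q r p :: nat and A :: "nat set"
  assumes "q \<ge> 2" and "r < q" and "p > q + r"
    and A: "A = {d. d < p \<and> d mod q = r}"
  shows "real (a_seq p A n) = real q * vl (real p) (base_digits (card A) n)
           + real r * (\<Sum>i<length (base_digits (card A) n). real p ^ i)"
proof -
  let ?s = "card A"
  let ?ds = "base_digits ?s n"
  have s2: "?s \<ge> 2" using card_A[OF assms(1-3)] N_props[OF assms(1-3)] A by simp
  have "a_seq p A n = (\<Sum>i<length ?ds. (q * (?ds ! i) + r) * p ^ i)"
    unfolding a_seq_def Let_def
  proof (intro sum.cong refl)
    fix i assume "i \<in> {..<length ?ds}"
    then have "?ds ! i < ?s" using bd_less[OF s2] nth_mem by blast
    then show "digit_map A (?ds ! i) * p ^ i = (q * (?ds ! i) + r) * p ^ i"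
      using digit_map_A[OF assms(1-3)] A by simp
  qed
  then have "real (a_seq p A n) = (\<Sum>i<length ?ds. (real q * real (?ds ! i) + real r) * real p ^ i)"
    by simp
  also have "\<dots> = real q * vl (real p) ?ds + real r * (\<Sum>i<length ?ds. real p ^ i)"
    by (simp add: vl_def sum_distrib_left sum.distrib algebra_simps)
  finally show ?thesis .
qed

lemma basic_facts:
  fixes q r p :: nat and A :: "nat set"
  assumes "q \<ge> 2" and "r < q" and "p > q + r"
    and A: "A = {d. d < p \<and> d mod q = r}"
  shows "card A \<ge> 2" "card A < p" "log (real (card A)) (real p) \<ge> 1"
    "real (card A) powr log (real (card A)) (real p) = real p"
proof -
  show s2: "card A \<ge> 2" using card_A[OF assms(1-3)] N_props[OF assms(1-3)] A by simp
  show sp: "card A < p" using card_A[OF assms(1-3)] N_props[OF assms(1-3)] A by simp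
  have "log (real (card A)) (real (card A)) \<le> log (real (card A)) (real p)"
    using s2 sp by (subst log_le_cancel_iff) auto
  then show "log (real (card A)) (real p) \<ge> 1" using s2 by simp
  show "real (card A) powr log (real (card A)) (real p) = real p"
    using s2 sp by (intro powr_log_cancel) auto
qed

lemma bounds:
  fixes q r p :: nat and A :: "nat set"
  assumes "q \<ge> 2" and "r < q" and "p > q + r"
    and A: "A = {d. d < p \<and> d mod q = r}" and n: "n \<ge> 1"
  shows "(real q * (real (card A) - 1) + real r) / (real p - 1) \<le> b_seq p A n"
        "b_seq p A n \<le> (real q * (real p - 1) + real p * real r) / (real p - 1)"
proof -
  note bf = basic_facts[OF assms(1-4)]
  define s where "s = card A"
  define al where "al = log (real s) (real p)"
  define ds where "ds = base_digits s n"
  define L where "L = length ds"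
  define G where "G = (\<Sum>i<L. real p ^ i)"
  have s2: "s \<ge> 2" and sp: "s < p" and al1: "al \<ge> 1" and sal: "real s powr al = real p"
    using bf by (simp_all add: s_def al_def)
  have p1: "real p - 1 > 0" using sp s2 by linarith
  have aF: "real (a_seq p A n) = real q * vl (real p) ds + real r * G"
    using a_formula[OF assms(1-4)] by (simp add: s_def ds_def G_def L_def)
  have G: "(real p - 1) * G = real p ^ L - 1" unfolding G_def by (rule geo)
  have dl: "\<forall>x\<in>set ds. x < s" using bd_less[OF s2] ds_def by blast
  have vs: "vl (real s) ds = real n" using bd_val[OF s2] ds_def by simp
  have len: "L \<ge> 1" "s ^ (L - 1) \<le> n" "n < s ^ L" using bd_len[OF s2] n ds_def L_def by auto
  have npos: "real n powr al > 0" using n by simp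
  have lo: "(real s - 1) * real n powr al \<le> (real p - 1) * vl (real p) ds"
    using lower_digits[OF s2 al1 dl] vs sal by simp
  have up: "vl (real p) ds \<le> real n powr al"
    using upper_digits[OF s2 al1, of ds] vs sal by simp
  have pL: "(real s ^ L) powr al = real p ^ L" using s2 sal by (simp add: pw_pow)
  have pL1: "(real s ^ (L - 1)) powr al = real p ^ (L - 1)" using s2 sal by (simp add: pw_pow)
  have n1: "real n powr al + 1 \<le> real p ^ L"
  proof -
    have "real n powr al + 1 powr al \<le> (real n + 1) powr al" using al1 by (intro superadd) auto
    also have "\<dots> \<le> (real s ^ L) powr al"
    proof (intro powr_mono2)
      have "n + 1 \<le> s ^ L" using len by simp
      then show "real n + 1 \<le> real s ^ L" by (metis of_nat_1 of_nat_add of_nat_le_iff of_nat_power)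
    qed (use al1 in auto)
    finally show ?thesis using pL by simp
  qed
  have n2: "real p ^ (L - 1) \<le> real n powr al"
  proof -
    have "real s ^ (L - 1) \<le> real n" using len by (metis of_nat_le_iff of_nat_power)
    then have "(real s ^ (L - 1)) powr al \<le> real n powr al" using al1 by (intro powr_mono2) auto
    then show ?thesis using pL1 by simp
  qed
  have pLs: "real p ^ L = real p * real p ^ (L - 1)" using len by (cases L) auto
  define H where "H = real q * (real s - 1) + real r"
  have "H * real n powr al = real q * ((real s - 1) * real n powr al) + real r * real n powr al"
    by (simp add: H_def algebra_simps)
  also have "\<dots> \<le> real q * ((real p - 1) * vl (real p) ds) + real r * (real p ^ L - 1)"
    using lo n1 by (intro add_mono mult_left_mono) auto
  also have "\<dots> = (real p - 1) * real (a_seq p A n)"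
    by (simp add: aF G[symmetric] algebra_simps)
  finally have LO: "H * real n powr al \<le> (real p - 1) * real (a_seq p A n)" .
  define M where "M = real q * (real p - 1) + real p * real r"
  have "(real p - 1) * real (a_seq p A n) = real q * ((real p - 1) * vl (real p) ds) + real r * (real p ^ L - 1)"
    by (simp add: aF G[symmetric] algebra_simps)
  also have "\<dots> \<le> real q * ((real p - 1) * real n powr al) + real r * (real p * real n powr al)"
  proof -
    have u1: "(real p - 1) * vl (real p) ds \<le> (real p - 1) * real n powr al" using up p1 by simp
    have u2: "real p ^ L - 1 \<le> real p * real n powr al" using n2 pLs p1
      by (smt (verit) mult_left_mono of_nat_0_le_iff)
    show ?thesis using mult_left_mono[OF u1, of "real q"] mult_left_mono[OF u2, of "real r"] by simp
  qed
  also have "\<dots> = M * real n powr al" by (simp add: M_def algebra_simps)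
  finally have UP: "(real p - 1) * real (a_seq p A n) \<le> M * real n powr al" .
  have bdef: "b_seq p A n = real (a_seq p A n) / real n powr al"
    by (simp add: b_seq_def al_def s_def)
  show "(real q * (real (card A) - 1) + real r) / (real p - 1) \<le> b_seq p A n"
    unfolding bdef using LO p1 npos by (simp add: H_def s_def field_simps)
  show "b_seq p A n \<le> (real q * (real p - 1) + real p * real r) / (real p - 1)"
    unfolding bdef using UP p1 npos by (simp add: M_def field_simps)
qed

lemma vl_rep: "vl b (replicate k c) = real c * (\<Sum>i<k. b ^ i)"
  by (simp add: vl_def sum_distrib_left)

lemma low_seq:
  fixes q r p :: nat and A :: "nat set"
  assumes "q \<ge> 2" and "r < q" and "p > q + r"
    and A: "A = {d. d < p \<and> d mod q = r}" and k: "k \<ge> 1"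
  shows "b_seq p A (card A ^ k - 1) = (real q * (real (card A) - 1) + real r) / (real p - 1)
          * (1 - (1 / real p) ^ k) / (1 - (1 / real (card A)) ^ k) powr log (real (card A)) (real p)"
proof -
  note bf = basic_facts[OF assms(1-4)]
  define s where "s = card A"
  define al where "al = log (real s) (real p)"
  define G where "G = (\<Sum>i<k. real p ^ i)"
  have s2: "s \<ge> 2" and sp: "s < p" and al1: "al \<ge> 1" and sal: "real s powr al = real p"
    using bf by (simp_all add: s_def al_def)
  have p1: "real p - 1 > 0" using sp s2 by linarith
  have ds: "base_digits s (s ^ k - 1) = replicate k (s - 1)" using bd_pm1[OF s2] .
  have aF0: "real (a_seq p A (s ^ k - 1)) = real q * vl (real p) (replicate k (s - 1)) + real r * G"
    using a_formula[OF assms(1-4), of "s ^ k - 1"] unfolding s_def[symmetric] ds G_def by simp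
  have aF: "real (a_seq p A (s ^ k - 1)) = (real q * (real s - 1) + real r) * G"
    using s2 unfolding aF0 vl_rep G_def by (simp add: of_nat_diff algebra_simps)
  have G: "(real p - 1) * G = real p ^ k - 1" unfolding G_def by (rule geo)
  have sk: "real (s ^ k - 1) = real s ^ k * (1 - (1 / real s) ^ k)"
  proof -
    have "s ^ k \<ge> 1" using s2 by simp
    then have "real (s ^ k - 1) = real s ^ k - 1" by (simp add: of_nat_diff)
    also have "\<dots> = real s ^ k * (1 - (1 / real s) ^ k)" using s2 by (simp add: algebra_simps power_one_over)
    finally show ?thesis .
  qed
  have X0: "1 - (1 / real s) ^ k \<ge> 0" using s2 by (simp add: power_le_one)
  have pw: "real (s ^ k - 1) powr al = real p ^ k * (1 - (1 / real s) ^ k) powr al"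
    unfolding sk using s2 X0 sal by (simp add: powr_mult pw_pow)
  have pk: "real p ^ k > 0" using sp by simp
  have "b_seq p A (s ^ k - 1) = (real q * (real s - 1) + real r) * G / (real p ^ k * (1 - (1 / real s) ^ k) powr al)"
    unfolding b_seq_def s_def[symmetric] al_def[symmetric] aF pw by simp
  also have "G = (real p ^ k - 1) / (real p - 1)" using G p1 by (simp add: field_simps)
  also have "real p ^ k - 1 = real p ^ k * (1 - (1 / real p) ^ k)" using sp by (simp add: algebra_simps power_one_over)
  finally have "b_seq p A (s ^ k - 1) = (real q * (real s - 1) + real r) * (real p ^ k * (1 - (1 / real p) ^ k) / (real p - 1)) / (real p ^ k * (1 - (1 / real s) ^ k) powr al)" .
  also have "\<dots> = (real q * (real s - 1) + real r) / (real p - 1) * (1 - (1 / real p) ^ k) / (1 - (1 / real s) ^ k) powr al"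
    using pk sp by (simp add: divide_simps)
  finally show ?thesis by (simp add: s_def al_def)
qed

lemma up_seq:
  fixes q r p :: nat and A :: "nat set"
  assumes "q \<ge> 2" and "r < q" and "p > q + r"
    and A: "A = {d. d < p \<and> d mod q = r}"
  shows "b_seq p A (card A ^ k) = real q + real r + real r / (real p - 1) * (1 - (1 / real p) ^ k)"
proof -
  note bf = basic_facts[OF assms(1-4)]
  define s where "s = card A"
  define al where "al = log (real s) (real p)"
  define G where "G = (\<Sum>i<k. real p ^ i)"
  have s2: "s \<ge> 2" and sp: "s < p" and al1: "al \<ge> 1" and sal: "real s powr al = real p"
    using bf by (simp_all add: s_def al_def)
  have p1: "real p - 1 > 0" using sp s2 by linarith
  have ds: "base_digits s (s ^ k) = replicate k 0 @ [1]" using bd_pow[OF s2] .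
  have aF0: "real (a_seq p A (s ^ k)) = real q * vl (real p) (replicate k 0 @ [1]) + real r * (\<Sum>i<Suc k. real p ^ i)"
    using a_formula[OF assms(1-4), of "s ^ k"] unfolding s_def[symmetric] ds by simp
  have aF: "real (a_seq p A (s ^ k)) = real q * real p ^ k + real r * (G + real p ^ k)"
    unfolding aF0 by (simp add: vl_snoc vl_rep G_def)
  have G: "(real p - 1) * G = real p ^ k - 1" unfolding G_def by (rule geo)
  have pw: "real (s ^ k) powr al = real p ^ k"
    using s2 sal pw_pow[of "real s" k al] by simp
  have pk: "real p ^ k > 0" using sp by simp
  have "b_seq p A (s ^ k) = (real q * real p ^ k + real r * (G + real p ^ k)) / real p ^ k"
    unfolding b_seq_def s_def[symmetric] al_def[symmetric] aF pw by simp
  also have "G = (real p ^ k - 1) / (real p - 1)" using G p1 by (simp add: field_simps)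
  finally show ?thesis using pk p1 sp by (simp add: s_def field_simps power_one_over)
qed



theorem theorem5:
  fixes q r p :: nat and A :: "nat set"
  assumes "q \<ge> 2" and "r < q" and "p > q + r"
    and "A = {d. d < p \<and> d mod q = r}"
  shows "(INF n\<in>{1..}. b_seq p A n) = (real q * (real (card A) - 1) + real r) / (real p - 1) \<and>
         (SUP n\<in>{1..}. b_seq p A n) = (real q * (real p - 1) + real p * real r) / (real p - 1)"
proof -
  note bf = basic_facts[OF assms(1-4)]
  define s where "s = card A"
  define al where "al = log (real s) (real p)"
  define L where "L = (real q * (real (card A) - 1) + real r) / (real p - 1)"
  define M where "M = (real q * (real p - 1) + real p * real r) / (real p - 1)"
  have s2: "s \<ge> 2" and sp: "s < p" and al1: "al \<ge> 1"
    using bf by (simp_all add: s_def al_def)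
  have p1: "real p - 1 > 0" using sp s2 by linarith
  have lo: "\<And>n. n \<in> {1..} \<Longrightarrow> L \<le> b_seq p A n" using bounds(1)[OF assms] by (simp add: L_def)
  have up: "\<And>n. n \<in> {1..} \<Longrightarrow> b_seq p A n \<le> M" using bounds(2)[OF assms] by (simp add: M_def)
  have bb: "bdd_below (b_seq p A ` {1..})" using lo by (intro bdd_belowI2) auto
  have ba: "bdd_above (b_seq p A ` {1..})" using up by (intro bdd_aboveI2) auto
  have ne: "{1::nat..} \<noteq> {}" by auto
  have lim1: "(\<lambda>k. L * (1 - (1 / real p) ^ k) / (1 - (1 / real s) ^ k) powr al) \<longlonglongrightarrow>
      L * (1 - 0) / (1 - 0) powr al"
    using s2 sp
    by (intro tendsto_intros LIMSEQ_power_zero) auto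
  have "\<forall>\<^sub>F k in sequentially. L * (1 - (1 / real p) ^ k) / (1 - (1 / real s) ^ k) powr al = b_seq p A (s ^ k - 1)"
    using low_seq[OF assms] by (intro eventually_sequentiallyI[of 1]) (simp add: L_def s_def al_def)
  then have lim1': "(\<lambda>k. b_seq p A (s ^ k - 1)) \<longlonglongrightarrow> L"
    using lim1 by (simp add: tendsto_cong)
  have "(INF n\<in>{1..}. b_seq p A n) \<le> L"
  proof (rule LIMSEQ_le_const[OF lim1'], intro exI allI impI)
    fix k :: nat assume "1 \<le> k"
    then have "s ^ k \<ge> s ^ 1" using s2 by (intro power_increasing) auto
    then have "s ^ k - 1 \<in> {1..}" using s2 by auto
    then show "(INF n\<in>{1..}. b_seq p A n) \<le> b_seq p A (s ^ k - 1)" by (rule cINF_lower[OF bb])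
  qed
  moreover have "L \<le> (INF n\<in>{1..}. b_seq p A n)" using lo ne by (intro cINF_greatest) auto
  ultimately have INF: "(INF n\<in>{1..}. b_seq p A n) = L" by linarith
  have Meq: "M = real q + real r + real r / (real p - 1) * (1 - 0)"
    using p1 by (simp add: M_def field_simps)
  have lim2: "(\<lambda>k. real q + real r + real r / (real p - 1) * (1 - (1 / real p) ^ k)) \<longlonglongrightarrow> M"
    unfolding Meq using sp s2 by (intro tendsto_intros LIMSEQ_power_zero) auto
  then have lim2': "(\<lambda>k. b_seq p A (s ^ k)) \<longlonglongrightarrow> M"
    using up_seq[OF assms] by (simp add: s_def)
  have "M \<le> (SUP n\<in>{1..}. b_seq p A n)"
  proof (rule LIMSEQ_le_const2[OF lim2'], intro exI allI impI)
    fix k :: nat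
    have "s ^ k \<in> {1..}" using s2 by auto
    then show "b_seq p A (s ^ k) \<le> (SUP n\<in>{1..}. b_seq p A n)" by (rule cSUP_upper[OF _ ba])
  qed
  moreover have "(SUP n\<in>{1..}. b_seq p A n) \<le> M" using up ne by (intro cSUP_least) auto
  ultimately have SUP: "(SUP n\<in>{1..}. b_seq p A n) = M" by linarith
  show ?thesis using INF SUP by (simp add: L_def M_def)
qed


end
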